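(* Let $n,m,k\ge1$, fix $i\in\{1,\dots,n\}$, and let $f\in L^2((0,1)^n)$, $h_1\in L^2((0,1)^m)$, $h_2\in L^2((0,1)^{k+n-1})$ be real-valued, with $f$ not a.e. constant. Define $g(x,\xi,\eta)=f(x)h_1(\xi)+h_2(x_{\sim i},\eta)$ for $x\in(0,1)^n$, $\xi\in(0,1)^m$, $\eta\in(0,1)^k$, and assume $\mathrm{Var}(g)>0$ and $\int h_1^2>0$. Then $S^g_{T_{x_i}}=\gamma_{f,h_1,h_2}S^f_{T_{x_i}}$, where $$\gamma_{f,h_1,h_2}=\frac{\int f^2\,dx-f_0^2}{\int f^2\,dx-\frac{f_0^2(h_1)_0^2}{\int h_1^2\,d\xi}+\frac{\int\int h_2^2\,dx_{\sim i}\,d\eta-(h_2)_0^2}{\int h_1^2\,d\xi}+2(h_1)_0\frac{(fh_2)_0-f_0(h_2)_0}{\int h_1^2\,d\xi}}.$$ If additionally $(h_1)_0(fh_2)_0\ge f_0(h_1)_0(h_2)_0$, then $S^g_{T_{x_i}}\le S^f_{T_{x_i}}$.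
   Context: All integrals are with respect to Lebesgue measure over unit cubes (inputs independent, uniform on $[0,1]$). $x_{\sim i}=(x_1,\dots,x_{i-1},x_{i+1},\dots,x_n)$. For a function $\varphi$, $\varphi_0=\int\varphi$ is its mean and $\mathrm{Var}(\varphi)=\int\varphi^2-\varphi_0^2$; in particular $(fh_2)_0=\int f(x)h_2(x_{\sim i},\eta)\,dx\,d\eta$. For square-integrable $\varphi$ of variables $(x,y)$ the total Sobol index of $x_i$ is $$S^{\varphi}_{T_{x_i}}=\frac{\int\varphi^2\,dx\,dy-\int\big(\int\varphi\,dx_i\big)^2dx_{\sim i}\,dy}{\mathrm{Var}(\varphi)}.$$ *)

theory Defs
  imports "HOL-Analysis.Analysis"
begin

text \<open>Lebesgue measure on the unit interval, and on unit cubes indexed by a finite set I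
  of coordinates (points are extensional functions nat \<Rightarrow> real with domain I).\<close>
definition unitI :: "real measure" where
  "unitI = restrict_space lborel {0..1}"

definition cube :: "nat set \<Rightarrow> (nat \<Rightarrow> real) measure" where
  "cube I = PiM I (\<lambda>_. unitI)"

definition mean :: "'a measure \<Rightarrow> ('a \<Rightarrow> real) \<Rightarrow> real" where
  "mean M \<phi> = (\<integral>z. \<phi> z \<partial>M)"

definition var :: "'a measure \<Rightarrow> ('a \<Rightarrow> real) \<Rightarrow> real" where
  "var M \<phi> = (\<integral>z. (\<phi> z)^2 \<partial>M) - (mean M \<phi>)^2"

text \<open>Integrating the squared partial integral over all of (x,y) is the same as over
  (x_{~i},y) since it does not depend on x_i and unitI has total mass 1.\<close>
definition total_sobol ::
  "nat set \<Rightarrow> 'b measure \<Rightarrow> nat \<Rightarrow> ((nat \<Rightarrow> real) \<times> 'b \<Rightarrow> real) \<Rightarrow> real" where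
  "total_sobol I N i \<phi> =
     ((\<integral>z. (\<phi> z)^2 \<partial>(cube I \<Otimes>\<^sub>M N))
      - (\<integral>z. (\<integral>t. \<phi> ((fst z)(i := t), snd z) \<partial>unitI)^2 \<partial>(cube I \<Otimes>\<^sub>M N)))
     / var (cube I \<Otimes>\<^sub>M N) \<phi>"

definition total_sobol_x ::
  "nat set \<Rightarrow> nat \<Rightarrow> ((nat \<Rightarrow> real) \<Rightarrow> real) \<Rightarrow> real" where
  "total_sobol_x I i \<phi> =
     ((\<integral>x. (\<phi> x)^2 \<partial>cube I)
      - (\<integral>x. (\<integral>t. \<phi> (x(i := t)) \<partial>unitI)^2 \<partial>cube I))
     / var (cube I) \<phi>"

definition gamma_coef ::
  "nat \<Rightarrow> nat \<Rightarrow> nat \<Rightarrow> nat \<Rightarrow> ((nat \<Rightarrow> real) \<Rightarrow> real) \<Rightarrow> ((nat \<Rightarrow> real) \<Rightarrow> real)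
     \<Rightarrow> ((nat \<Rightarrow> real) \<Rightarrow> (nat \<Rightarrow> real) \<Rightarrow> real) \<Rightarrow> real" where
  "gamma_coef n m k i f h1 h2 =
    (let f0 = mean (cube {1..n}) f;
         h10 = mean (cube {1..m}) h1;
         h20 = mean (cube ({1..n} - {i}) \<Otimes>\<^sub>M cube {1..k}) (\<lambda>(u, \<eta>). h2 u \<eta>);
         fh20 = mean (cube {1..n} \<Otimes>\<^sub>M cube {1..k})
                  (\<lambda>(x, \<eta>). f x * h2 (restrict x ({1..n} - {i})) \<eta>);
         If2 = (\<integral>x. (f x)^2 \<partial>cube {1..n});
         Ih1 = (\<integral>\<xi>. (h1 \<xi>)^2 \<partial>cube {1..m});
         Ih2 = (\<integral>z. (case_prod h2 z)^2 \<partial>(cube ({1..n} - {i}) \<Otimes>\<^sub>M cube {1..k}))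
     in (If2 - f0^2) /
        (If2 - f0^2 * h10^2 / Ih1 + (Ih2 - h20^2) / Ih1 + 2 * h10 * ((fh20 - f0 * h20) / Ih1)))"

end

theory Submission
  imports Defs "HOL-Probability.Probability"
begin


lemma prob_unitI: "prob_space unitI"
  unfolding unitI_def by (rule prob_space_restrict_space) auto

lemma prob_cube: "prob_space (cube I)"
  unfolding cube_def by (rule prob_space_PiM) (rule prob_unitI)

lemma measurable_upd_cube:
  assumes "i \<in> I"
  shows "(\<lambda>(x,t). x(i:=t)) \<in> measurable (cube I \<Otimes>\<^sub>M unitI) (cube I)"
  unfolding cube_def using measurable_add_dim[of i "I" "\<lambda>_. unitI"] assms
  by (simp add: insert_absorb)

lemma jensen_sq:
  fixes f :: "'a \<Rightarrow> real"
  assumes "prob_space M" "f \<in> borel_measurable M" "integrable M (\<lambda>x. (f x)^2)"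
  shows "integrable M f" "(\<integral>x. f x \<partial>M)^2 \<le> (\<integral>x. (f x)^2 \<partial>M)"
proof -
  interpret prob_space M by fact
  show i: "integrable M f" by (rule square_integrable_imp_integrable) (use assms in auto)
  have "0 \<le> variance f" by (rule integral_nonneg_AE) auto
  also have "variance f = (\<integral>x. (f x)^2 \<partial>M) - (\<integral>x. f x \<partial>M)^2"
    by (rule variance_eq) (use i assms in auto)
  finally show "(\<integral>x. f x \<partial>M)^2 \<le> (\<integral>x. (f x)^2 \<partial>M)" by simp
qed

lemma distr_restrict_cube:
  assumes "finite I" "J \<subseteq> I"
  shows "distr (cube I) (cube J) (\<lambda>x. restrict x J) = cube J"
proof -
  interpret product_prob_space "\<lambda>_. unitI" I
    by (simp add: prob_unitI product_prob_space_def product_prob_space_axioms_def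
        product_sigma_finite_def prob_space_imp_sigma_finite)
  show ?thesis unfolding cube_def by (rule distr_PiM_restrict_finite) (use assms in \<open>auto intro: finite_subset\<close>)
qed

lemma D1:
  assumes fin: "finite I" and i: "i \<in> I"
  shows "distr (cube I \<Otimes>\<^sub>M unitI) (cube I) (\<lambda>(x,t). x(i:=t)) = cube I"
proof (rule measure_eqI)
  show "sets (distr (cube I \<Otimes>\<^sub>M unitI) (cube I) (\<lambda>(x,t). x(i:=t))) = sets (cube I)" by simp
  fix S assume S: "S \<in> sets (distr (cube I \<Otimes>\<^sub>M unitI) (cube I) (\<lambda>(x,t). x(i:=t)))"
  then have S': "S \<in> sets (cube I)" by simp
  interpret U: prob_space unitI by (rule prob_unitI)
  interpret ps: product_sigma_finite "\<lambda>_. unitI"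
    by (simp add: product_sigma_finite_def prob_space_imp_sigma_finite prob_unitI)
  define R where "R = I - {i}"
  have IR: "insert i R = I" using i unfolding R_def by auto
  have fR: "finite R" "i \<notin> R" using fin unfolding R_def by auto
  have mu: "(\<lambda>(x,t). x(i:=t)) \<in> measurable (cube I \<Otimes>\<^sub>M unitI) (cube I)"
    by (rule measurable_upd_cube[OF i])
  have mR: "(\<lambda>(x,t). x(i:=t)) \<in> measurable (cube R \<Otimes>\<^sub>M unitI) (cube I)"
    unfolding cube_def using measurable_add_dim[of i R "\<lambda>_. unitI"] IR by simp
  have "emeasure (distr (cube I \<Otimes>\<^sub>M unitI) (cube I) (\<lambda>(x,t). x(i:=t))) S
      = (\<integral>\<^sup>+ z. indicator S z \<partial>distr (cube I \<Otimes>\<^sub>M unitI) (cube I) (\<lambda>(x,t). x(i:=t)))"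
    using S by simp
  also have "\<dots> = (\<integral>\<^sup>+ z. indicator S ((\<lambda>(x,t). x(i:=t)) z) \<partial>(cube I \<Otimes>\<^sub>M unitI))"
    by (rule nn_integral_distr) (use S' mu in auto)
  also have "\<dots> = (\<integral>\<^sup>+ x. \<integral>\<^sup>+ t. indicator S (x(i:=t)) \<partial>unitI \<partial>cube I)"
    by (subst U.nn_integral_fst[symmetric]) (use S' mu in \<open>auto intro!: nn_integral_cong\<close>)
  also have "\<dots> = (\<integral>\<^sup>+ x. (\<lambda>u. \<integral>\<^sup>+ t. indicator S (u(i:=t)) \<partial>unitI) (restrict x R) \<partial>cube I)"
  proof (rule nn_integral_cong)
    fix x assume "x \<in> space (cube I)"
    then have "x(i:=t) = (restrict x R)(i:=t)" for t
      using i by (auto simp: cube_def space_PiM PiE_def extensional_def R_def restrict_def)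
    then show "(\<integral>\<^sup>+ t. indicator S (x(i:=t)) \<partial>unitI) = (\<lambda>u. \<integral>\<^sup>+ t. indicator S (u(i:=t)) \<partial>unitI) (restrict x R)"
      by simp
  qed
  also have "\<dots> = (\<integral>\<^sup>+ u. \<integral>\<^sup>+ t. indicator S (u(i:=t)) \<partial>unitI \<partial>distr (cube I) (cube R) (\<lambda>x. restrict x R))"
  proof -
    have mres: "(\<lambda>x. restrict x R) \<in> measurable (cube I) (cube R)"
      unfolding cube_def by (rule measurable_restrict_subset) (auto simp: R_def)
    have "(\<lambda>z. indicator S ((\<lambda>(x,t). x(i:=t)) z) :: ennreal) \<in> borel_measurable (cube R \<Otimes>\<^sub>M unitI)"
      by (rule measurable_compose[OF mR]) (use S' in simp)
    from U.borel_measurable_nn_integral_fst[OF this]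
    have mPhi: "(\<lambda>u. \<integral>\<^sup>+ t. indicator S (u(i:=t)) \<partial>unitI) \<in> borel_measurable (cube R)" by simp
    show ?thesis
      by (rule nn_integral_distr[symmetric, OF mres]) (use mPhi in simp)
  qed
  also have "\<dots> = (\<integral>\<^sup>+ u. \<integral>\<^sup>+ t. indicator S (u(i:=t)) \<partial>unitI \<partial>cube R)"
    using distr_restrict_cube[OF fin] R_def by auto
  also have "\<dots> = (\<integral>\<^sup>+ x. indicator S x \<partial>cube I)"
    unfolding cube_def using ps.product_nn_integral_insert[OF fR, of "indicator S"] S' IR
    by (simp add: cube_def)
  also have "\<dots> = emeasure (cube I) S" using S' by simp
  finally show "emeasure (distr (cube I \<Otimes>\<^sub>M unitI) (cube I) (\<lambda>(x,t). x(i:=t))) S = emeasure (cube I) S" .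
qed


lemma D2:
  assumes fin: "finite I" and i: "i \<in> I" and N: "prob_space N"
  shows "distr ((cube I \<Otimes>\<^sub>M N) \<Otimes>\<^sub>M unitI) (cube I \<Otimes>\<^sub>M N) (\<lambda>(z,t). ((fst z)(i:=t), snd z)) = cube I \<Otimes>\<^sub>M N"
proof (rule measure_eqI)
  show "sets (distr ((cube I \<Otimes>\<^sub>M N) \<Otimes>\<^sub>M unitI) (cube I \<Otimes>\<^sub>M N) (\<lambda>(z,t). ((fst z)(i:=t), snd z))) = sets (cube I \<Otimes>\<^sub>M N)" by simp
  fix S assume "S \<in> sets (distr ((cube I \<Otimes>\<^sub>M N) \<Otimes>\<^sub>M unitI) (cube I \<Otimes>\<^sub>M N) (\<lambda>(z,t). ((fst z)(i:=t), snd z)))"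
  then have S'[measurable]: "S \<in> sets (cube I \<Otimes>\<^sub>M N)" by simp
  interpret U: prob_space unitI by (rule prob_unitI)
  interpret NN: prob_space N by (rule N)
  interpret A: prob_space "cube I" by (rule prob_cube)
  interpret AN: pair_sigma_finite "cube I" N by intro_locales
  have mu[measurable]: "(\<lambda>(x,t). x(i:=t)) \<in> measurable (cube I \<Otimes>\<^sub>M unitI) (cube I)"
    by (rule measurable_upd_cube[OF i])
  have mT[measurable]: "(\<lambda>(z,t). ((fst z)(i:=t), snd z)) \<in> measurable ((cube I \<Otimes>\<^sub>M N) \<Otimes>\<^sub>M unitI) (cube I \<Otimes>\<^sub>M N)"
  proof -
    have "(\<lambda>w. (\<lambda>(x,t). x(i:=t)) (fst (fst w), snd w)) \<in> measurable ((cube I \<Otimes>\<^sub>M N) \<Otimes>\<^sub>M unitI) (cube I)"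
      by measurable
    then show ?thesis by (simp add: split_beta')
  qed
  have m1: "(\<lambda>w. indicator S ((fst (fst w))(i:=snd w), snd (fst w)) :: ennreal) \<in> borel_measurable ((cube I \<Otimes>\<^sub>M N) \<Otimes>\<^sub>M unitI)"
    using measurable_compose[OF mT borel_measurable_indicator[OF S']] by (simp add: split_beta')
  have m2: "(\<lambda>z. \<integral>\<^sup>+ t. indicator S ((fst z)(i:=t), snd z) \<partial>unitI) \<in> borel_measurable (cube I \<Otimes>\<^sub>M N)"
    using U.borel_measurable_nn_integral_fst[OF m1] by simp
  have "emeasure (distr ((cube I \<Otimes>\<^sub>M N) \<Otimes>\<^sub>M unitI) (cube I \<Otimes>\<^sub>M N) (\<lambda>(z,t). ((fst z)(i:=t), snd z))) S
      = (\<integral>\<^sup>+ w. indicator S w \<partial>distr ((cube I \<Otimes>\<^sub>M N) \<Otimes>\<^sub>M unitI) (cube I \<Otimes>\<^sub>M N) (\<lambda>(z,t). ((fst z)(i:=t), snd z)))"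
    using S' by simp
  also have "\<dots> = (\<integral>\<^sup>+ w. indicator S ((\<lambda>(z,t). ((fst z)(i:=t), snd z)) w) \<partial>((cube I \<Otimes>\<^sub>M N) \<Otimes>\<^sub>M unitI))"
    by (rule nn_integral_distr) (use S' mT in auto)
  also have "\<dots> = (\<integral>\<^sup>+ z. \<integral>\<^sup>+ t. indicator S ((fst z)(i:=t), snd z) \<partial>unitI \<partial>(cube I \<Otimes>\<^sub>M N))"
    by (subst U.nn_integral_fst[symmetric]) (use m1 in \<open>auto simp: split_beta' intro!: nn_integral_cong\<close>)
  also have "\<dots> = (\<integral>\<^sup>+ y. \<integral>\<^sup>+ x. \<integral>\<^sup>+ t. indicator S (x(i:=t), y) \<partial>unitI \<partial>cube I \<partial>N)"
    using AN.nn_integral_snd[OF m2] by simp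
  also have "\<dots> = (\<integral>\<^sup>+ y. \<integral>\<^sup>+ x. indicator S (x, y) \<partial>cube I \<partial>N)"
  proof (rule nn_integral_cong)
    fix y assume y: "y \<in> space N"
    have m3: "(\<lambda>x. indicator S (x, y) :: ennreal) \<in> borel_measurable (cube I)"
      using y by measurable
    have m4: "(\<lambda>w. indicator S ((fst w)(i:=snd w), y) :: ennreal) \<in> borel_measurable (cube I \<Otimes>\<^sub>M unitI)"
      using measurable_compose[OF mu m3] by (simp add: split_beta')
    have "(\<integral>\<^sup>+ x. \<integral>\<^sup>+ t. indicator S (x(i:=t), y) \<partial>unitI \<partial>cube I)
        = (\<integral>\<^sup>+ w. indicator S ((fst w)(i:=snd w), y) \<partial>(cube I \<Otimes>\<^sub>M unitI))"
      using U.nn_integral_fst[OF m4] by simp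
    also have "\<dots> = (\<integral>\<^sup>+ x. indicator S (x, y) \<partial>distr (cube I \<Otimes>\<^sub>M unitI) (cube I) (\<lambda>(x,t). x(i:=t)))"
      by (subst nn_integral_distr[OF mu]) (use m3 in \<open>simp_all add: split_beta'\<close>)
    also have "\<dots> = (\<integral>\<^sup>+ x. indicator S (x, y) \<partial>cube I)"
      using D1[OF fin i] by simp
    finally show "(\<integral>\<^sup>+ x. \<integral>\<^sup>+ t. indicator S (x(i:=t), y) \<partial>unitI \<partial>cube I) = (\<integral>\<^sup>+ x. indicator S (x, y) \<partial>cube I)" .
  qed
  also have "\<dots> = emeasure (cube I \<Otimes>\<^sub>M N) S"
    using AN.nn_integral_snd[of "indicator S"] S' by simp
  finally show "emeasure (distr ((cube I \<Otimes>\<^sub>M N) \<Otimes>\<^sub>M unitI) (cube I \<Otimes>\<^sub>M N) (\<lambda>(z,t). ((fst z)(i:=t), snd z))) S = emeasure (cube I \<Otimes>\<^sub>M N) S" .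
qed


lemma D3:
  assumes A: "prob_space A" and B: "prob_space B" and C: "prob_space C"
  shows "distr (A \<Otimes>\<^sub>M (B \<Otimes>\<^sub>M C)) ((A \<Otimes>\<^sub>M C) \<Otimes>\<^sub>M B) (\<lambda>w. ((fst w, snd (snd w)), fst (snd w))) = (A \<Otimes>\<^sub>M C) \<Otimes>\<^sub>M B"
proof (rule measure_eqI)
  show "sets (distr (A \<Otimes>\<^sub>M (B \<Otimes>\<^sub>M C)) ((A \<Otimes>\<^sub>M C) \<Otimes>\<^sub>M B) (\<lambda>w. ((fst w, snd (snd w)), fst (snd w)))) = sets ((A \<Otimes>\<^sub>M C) \<Otimes>\<^sub>M B)" by simp
  fix S assume "S \<in> sets (distr (A \<Otimes>\<^sub>M (B \<Otimes>\<^sub>M C)) ((A \<Otimes>\<^sub>M C) \<Otimes>\<^sub>M B) (\<lambda>w. ((fst w, snd (snd w)), fst (snd w))))"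
  then have S'[measurable]: "S \<in> sets ((A \<Otimes>\<^sub>M C) \<Otimes>\<^sub>M B)" by simp
  interpret A: prob_space A by (rule A)
  interpret B: prob_space B by (rule B)
  interpret C: prob_space C by (rule C)
  interpret BC: pair_sigma_finite B C by intro_locales
  interpret BCp: prob_space "B \<Otimes>\<^sub>M C" by (rule prob_space_pair[OF B C])
  have mr[measurable]: "(\<lambda>w. ((fst w, snd (snd w)), fst (snd w))) \<in> measurable (A \<Otimes>\<^sub>M (B \<Otimes>\<^sub>M C)) ((A \<Otimes>\<^sub>M C) \<Otimes>\<^sub>M B)"
    by measurable
  have "emeasure (distr (A \<Otimes>\<^sub>M (B \<Otimes>\<^sub>M C)) ((A \<Otimes>\<^sub>M C) \<Otimes>\<^sub>M B) (\<lambda>w. ((fst w, snd (snd w)), fst (snd w)))) S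
     = (\<integral>\<^sup>+ w. indicator S w \<partial>distr (A \<Otimes>\<^sub>M (B \<Otimes>\<^sub>M C)) ((A \<Otimes>\<^sub>M C) \<Otimes>\<^sub>M B) (\<lambda>w. ((fst w, snd (snd w)), fst (snd w))))"
    using S' by simp
  also have "\<dots> = (\<integral>\<^sup>+ w. indicator S ((fst w, snd (snd w)), fst (snd w)) \<partial>(A \<Otimes>\<^sub>M (B \<Otimes>\<^sub>M C)))"
    by (rule nn_integral_distr) (use S' mr in auto)
  also have "\<dots> = (\<integral>\<^sup>+ x. \<integral>\<^sup>+ v. indicator S ((x, snd v), fst v) \<partial>(B \<Otimes>\<^sub>M C) \<partial>A)"
    by (subst sigma_finite_measure.nn_integral_fst[OF prob_space_imp_sigma_finite[OF prob_space_pair[OF B C]], symmetric]) (auto intro!: nn_integral_cong)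
  also have "\<dots> = (\<integral>\<^sup>+ x. \<integral>\<^sup>+ \<eta>. \<integral>\<^sup>+ \<xi>. indicator S ((x, \<eta>), \<xi>) \<partial>B \<partial>C \<partial>A)"
  proof (rule nn_integral_cong)
    fix x assume x: "x \<in> space A"
    have "(\<lambda>v. indicator S ((x, snd v), fst v) :: ennreal) \<in> borel_measurable (B \<Otimes>\<^sub>M C)"
      using x by measurable
    from BC.nn_integral_snd[OF this]
    show "(\<integral>\<^sup>+ v. indicator S ((x, snd v), fst v) \<partial>(B \<Otimes>\<^sub>M C)) = (\<integral>\<^sup>+ \<eta>. \<integral>\<^sup>+ \<xi>. indicator S ((x, \<eta>), \<xi>) \<partial>B \<partial>C)"
      by simp
  qed
  also have "\<dots> = (\<integral>\<^sup>+ u. \<integral>\<^sup>+ \<xi>. indicator S (u, \<xi>) \<partial>B \<partial>(A \<Otimes>\<^sub>M C))"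
    by (subst C.nn_integral_fst[symmetric]) auto
  also have "\<dots> = emeasure ((A \<Otimes>\<^sub>M C) \<Otimes>\<^sub>M B) S"
    by (subst B.nn_integral_fst) auto
  finally show "emeasure (distr (A \<Otimes>\<^sub>M (B \<Otimes>\<^sub>M C)) ((A \<Otimes>\<^sub>M C) \<Otimes>\<^sub>M B) (\<lambda>w. ((fst w, snd (snd w)), fst (snd w)))) S = emeasure ((A \<Otimes>\<^sub>M C) \<Otimes>\<^sub>M B) S" .
qed

lemma F2:
  fixes p :: "'a \<Rightarrow> real" and q :: "'b \<Rightarrow> real"
  assumes M1: "prob_space M1" and M2: "prob_space M2" and p: "integrable M1 p" and q: "integrable M2 q"
  shows "integrable (M1 \<Otimes>\<^sub>M M2) (\<lambda>z. p (fst z) * q (snd z))"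
    and "(\<integral>z. p (fst z) * q (snd z) \<partial>(M1 \<Otimes>\<^sub>M M2)) = (\<integral>x. p x \<partial>M1) * (\<integral>y. q y \<partial>M2)"
proof -
  interpret M1: prob_space M1 by (rule M1)
  interpret M2: prob_space M2 by (rule M2)
  interpret P: pair_sigma_finite M1 M2 by intro_locales
  have [measurable]: "p \<in> borel_measurable M1" "q \<in> borel_measurable M2" using p q by auto
  show i: "integrable (M1 \<Otimes>\<^sub>M M2) (\<lambda>z. p (fst z) * q (snd z))"
  proof (rule P.Fubini_integrable)
    show "(\<lambda>z. p (fst z) * q (snd z)) \<in> borel_measurable (M1 \<Otimes>\<^sub>M M2)" by measurable
    have "integrable M1 (\<lambda>x. \<bar>p x\<bar> * (\<integral>y. \<bar>q y\<bar> \<partial>M2))"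
      using p by (intro integrable_mult_left integrable_abs)
    then show "integrable M1 (\<lambda>x. \<integral>y. norm (p (fst (x, y)) * q (snd (x, y))) \<partial>M2)"
      by (simp add: abs_mult)
    show "AE x in M1. integrable M2 (\<lambda>y. p (fst (x, y)) * q (snd (x, y)))"
      using q by (auto intro!: integrable_mult_right)
  qed
  have "(\<integral>z. p (fst z) * q (snd z) \<partial>(M1 \<Otimes>\<^sub>M M2)) = (\<integral>x. \<integral>y. p x * q y \<partial>M2 \<partial>M1)"
    using P.integral_fst'[OF i] by simp
  also have "\<dots> = (\<integral>x. p x * (\<integral>y. q y \<partial>M2) \<partial>M1)" by simp
  also have "\<dots> = (\<integral>x. p x \<partial>M1) * (\<integral>y. q y \<partial>M2)" by simp
  finally show "(\<integral>z. p (fst z) * q (snd z) \<partial>(M1 \<Otimes>\<^sub>M M2)) = (\<integral>x. p x \<partial>M1) * (\<integral>y. q y \<partial>M2)" .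
qed

lemma F0:
  fixes p :: "'a \<Rightarrow> real"
  assumes N: "prob_space N" and p: "integrable M p"
  shows "integrable (M \<Otimes>\<^sub>M N) (\<lambda>z. p (fst z))"
    and "(\<integral>z. p (fst z) \<partial>(M \<Otimes>\<^sub>M N)) = (\<integral>x. p x \<partial>M)"
proof -
  interpret N: prob_space N by (rule N)
  have d: "distr (M \<Otimes>\<^sub>M N) M fst = M" by (rule N.distr_pair_fst)
  have [measurable]: "p \<in> borel_measurable M" using p by auto
  show "integrable (M \<Otimes>\<^sub>M N) (\<lambda>z. p (fst z))"
    using integrable_distr_eq[of fst "M \<Otimes>\<^sub>M N" M p] d p by simp
  show "(\<integral>z. p (fst z) \<partial>(M \<Otimes>\<^sub>M N)) = (\<integral>x. p x \<partial>M)"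
    using integral_distr[of fst "M \<Otimes>\<^sub>M N" M p] d by simp
qed

lemma F3:
  fixes p :: "'a \<times> 'c \<Rightarrow> real" and q :: "'b \<Rightarrow> real"
  assumes A: "prob_space A" and B: "prob_space B" and C: "prob_space C"
    and p: "integrable (A \<Otimes>\<^sub>M C) p" and q: "integrable B q"
  shows "integrable (A \<Otimes>\<^sub>M (B \<Otimes>\<^sub>M C)) (\<lambda>w. p (fst w, snd (snd w)) * q (fst (snd w)))"
    and "(\<integral>w. p (fst w, snd (snd w)) * q (fst (snd w)) \<partial>(A \<Otimes>\<^sub>M (B \<Otimes>\<^sub>M C))) = (\<integral>u. p u \<partial>(A \<Otimes>\<^sub>M C)) * (\<integral>y. q y \<partial>B)"
proof -
  have AC: "prob_space (A \<Otimes>\<^sub>M C)" by (rule prob_space_pair[OF A C])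
  note f2 = F2[OF AC B p q]
  have d: "distr (A \<Otimes>\<^sub>M (B \<Otimes>\<^sub>M C)) ((A \<Otimes>\<^sub>M C) \<Otimes>\<^sub>M B) (\<lambda>w. ((fst w, snd (snd w)), fst (snd w))) = (A \<Otimes>\<^sub>M C) \<Otimes>\<^sub>M B"
    by (rule D3[OF A B C])
  have mr: "(\<lambda>w. ((fst w, snd (snd w)), fst (snd w))) \<in> measurable (A \<Otimes>\<^sub>M (B \<Otimes>\<^sub>M C)) ((A \<Otimes>\<^sub>M C) \<Otimes>\<^sub>M B)"
    by measurable
  have mf: "(\<lambda>z. p (fst z) * q (snd z)) \<in> borel_measurable ((A \<Otimes>\<^sub>M C) \<Otimes>\<^sub>M B)"
    using f2(1) by auto
  show "integrable (A \<Otimes>\<^sub>M (B \<Otimes>\<^sub>M C)) (\<lambda>w. p (fst w, snd (snd w)) * q (fst (snd w)))"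
    using integrable_distr_eq[OF mr mf] d f2(1) by simp
  show "(\<integral>w. p (fst w, snd (snd w)) * q (fst (snd w)) \<partial>(A \<Otimes>\<^sub>M (B \<Otimes>\<^sub>M C))) = (\<integral>u. p u \<partial>(A \<Otimes>\<^sub>M C)) * (\<integral>y. q y \<partial>B)"
    using integral_distr[OF mr mf] d f2(2) by simp
qed


lemma abs_mult_le_sq: "\<bar>a*b\<bar> \<le> a^2 + (b::real)^2"
proof -
  have "0 \<le> (\<bar>a\<bar> - \<bar>b\<bar>)^2" by simp
  then have "2*(\<bar>a\<bar>*\<bar>b\<bar>) \<le> a^2 + b^2" by (simp add: power2_eq_square algebra_simps)
  moreover have "0 \<le> \<bar>a\<bar>*\<bar>b\<bar>" by simp
  ultimately show ?thesis using abs_mult[of a b] by linarith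
qed

lemma Lproj:
  fixes \<phi> :: "'a \<Rightarrow> real" and T :: "'a \<times> real \<Rightarrow> 'a"
  assumes M: "prob_space M"
    and mT[measurable]: "T \<in> measurable (M \<Otimes>\<^sub>M unitI) M"
    and dT: "distr (M \<Otimes>\<^sub>M unitI) M T = M"
    and idem: "\<And>z s t. T (T (z,s), t) = T (z,t)"
    and m\<phi>[measurable]: "\<phi> \<in> borel_measurable M" and sq: "integrable M (\<lambda>z. (\<phi> z)^2)"
  shows "(\<lambda>z. \<integral>t. \<phi> (T (z,t)) \<partial>unitI) \<in> borel_measurable M"
    and "integrable M (\<lambda>z. (\<integral>t. \<phi> (T (z,t)) \<partial>unitI)^2)"
    and "integrable M (\<lambda>z. (\<phi> z - (\<integral>t. \<phi> (T (z,t)) \<partial>unitI))^2)"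
    and "(\<integral>z. (\<phi> z)^2 \<partial>M) - (\<integral>z. (\<integral>t. \<phi> (T (z,t)) \<partial>unitI)^2 \<partial>M)
         = (\<integral>z. (\<phi> z - (\<integral>t. \<phi> (T (z,t)) \<partial>unitI))^2 \<partial>M)"
    and "AE z in M. integrable unitI (\<lambda>t. \<phi> (T (z,t)))"
proof -
  interpret M: prob_space M by (rule M)
  interpret U: prob_space unitI by (rule prob_unitI)
  interpret P: pair_sigma_finite M unitI by intro_locales
  define P where "P z = (\<integral>t. \<phi> (T (z,t)) \<partial>unitI)" for z
  have intphi: "integrable M \<phi>" by (rule jensen_sq(1)[OF M m\<phi> sq])
  have iT: "integrable (M \<Otimes>\<^sub>M unitI) (\<lambda>w. \<phi> (T w))"
    using integrable_distr_eq[OF mT m\<phi>] dT intphi by simp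
  have m\<phi>2: "(\<lambda>z. (\<phi> z)^2) \<in> borel_measurable M" by measurable
  have iT2: "integrable (M \<Otimes>\<^sub>M unitI) (\<lambda>w. (\<phi> (T w))^2)"
    using integrable_distr_eq[OF mT m\<phi>2] dT sq by simp
  have mP[measurable]: "P \<in> borel_measurable M"
    unfolding P_def by measurable
  then show "(\<lambda>z. \<integral>t. \<phi> (T (z,t)) \<partial>unitI) \<in> borel_measurable M" by (simp add: P_def)
  have AE1: "AE z in M. integrable unitI (\<lambda>t. \<phi> (T (z,t)))"
    using P.AE_integrable_fst'[OF iT] by simp
  then show "AE z in M. integrable unitI (\<lambda>t. \<phi> (T (z,t)))" .
  have AE2: "AE z in M. integrable unitI (\<lambda>t. (\<phi> (T (z,t)))^2)"
    using P.AE_integrable_fst'[OF iT2] by simp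
  define Q where "Q z = (\<integral>t. (\<phi> (T (z,t)))^2 \<partial>unitI)" for z
  have iQ: "integrable M Q" unfolding Q_def using P.integrable_fst'[OF iT2] by simp
  have pw: "(P z)^2 \<le> Q z" if z: "z \<in> space M" and iz: "integrable unitI (\<lambda>t. (\<phi> (T (z,t)))^2)" for z
  proof -
    have "(\<lambda>t. \<phi> (T (z,t))) \<in> borel_measurable unitI" using z by measurable
    from jensen_sq(2)[OF prob_unitI this iz] show ?thesis by (simp add: P_def Q_def)
  qed
  have AEb: "AE z in M. norm ((P z)^2) \<le> norm (Q z)"
    using AE2 AE_space
  proof eventually_elim
    case (elim z)
    then have "(P z)^2 \<le> Q z" by (intro pw)
    moreover have "0 \<le> Q z" unfolding Q_def by simp
    ultimately show ?case by simp
  qed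
  have iP2: "integrable M (\<lambda>z. (P z)^2)"
    by (rule Bochner_Integration.integrable_bound[OF iQ _ AEb]) measurable
  then show "integrable M (\<lambda>z. (\<integral>t. \<phi> (T (z,t)) \<partial>unitI)^2)" by (simp add: P_def)
  have icross: "integrable M (\<lambda>z. \<phi> z * P z)"
  proof (rule Bochner_Integration.integrable_bound[OF Bochner_Integration.integrable_add[OF sq iP2]])
    show "(\<lambda>z. \<phi> z * P z) \<in> borel_measurable M" by measurable
    show "AE z in M. norm (\<phi> z * P z) \<le> norm ((\<phi> z)^2 + (P z)^2)"
      using abs_mult_le_sq by auto
  qed
  have mcross: "(\<lambda>z. \<phi> z * P z) \<in> borel_measurable M" by measurable
  have PT: "P (T (z,t)) = P z" for z t unfolding P_def by (simp add: idem)
  have iPsi: "integrable (M \<Otimes>\<^sub>M unitI) (\<lambda>w. \<phi> (T w) * P (T w))"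
    using integrable_distr_eq[OF mT mcross] dT icross by simp
  have "(\<integral>z. \<phi> z * P z \<partial>M) = (\<integral>w. \<phi> (T w) * P (T w) \<partial>(M \<Otimes>\<^sub>M unitI))"
    using integral_distr[OF mT mcross] dT by simp
  also have "\<dots> = (\<integral>z. \<integral>t. \<phi> (T (z,t)) * P (T (z,t)) \<partial>unitI \<partial>M)"
    using P.integral_fst'[OF iPsi] by simp
  also have "\<dots> = (\<integral>z. (P z)^2 \<partial>M)"
    by (simp only: PT) (simp add: power2_eq_square P_def)
  finally have key: "(\<integral>z. \<phi> z * P z \<partial>M) = (\<integral>z. (P z)^2 \<partial>M)" .
  have eq: "(\<lambda>z. (\<phi> z - P z)^2) = (\<lambda>z. ((\<phi> z)^2 - 2 * (\<phi> z * P z)) + (P z)^2)"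
    by (rule ext) (simp add: power2_diff algebra_simps)
  have i3: "integrable M (\<lambda>z. (\<phi> z - P z)^2)"
    unfolding eq by (intro Bochner_Integration.integrable_add Bochner_Integration.integrable_diff Bochner_Integration.integrable_mult_right sq icross iP2)
  then show "integrable M (\<lambda>z. (\<phi> z - (\<integral>t. \<phi> (T (z,t)) \<partial>unitI))^2)" by (simp add: P_def)
  have "(\<integral>z. (\<phi> z - P z)^2 \<partial>M) = (\<integral>z. (\<phi> z)^2 \<partial>M) - 2 * (\<integral>z. \<phi> z * P z \<partial>M) + (\<integral>z. (P z)^2 \<partial>M)"
    unfolding eq
    by (subst Bochner_Integration.integral_add, (intro Bochner_Integration.integrable_diff Bochner_Integration.integrable_mult_right sq icross iP2)+,
        subst Bochner_Integration.integral_diff, (intro Bochner_Integration.integrable_mult_right sq icross)+) simp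
  then show "(\<integral>z. (\<phi> z)^2 \<partial>M) - (\<integral>z. (\<integral>t. \<phi> (T (z,t)) \<partial>unitI)^2 \<partial>M)
         = (\<integral>z. (\<phi> z - (\<integral>t. \<phi> (T (z,t)) \<partial>unitI))^2 \<partial>M)"
    using key by (simp add: P_def)
qed



lemma final_alg:
  fixes If2 f0 sh h10 Ih2 h20 fh20 Nf Eg2 Eg :: real
  assumes sh: "sh > 0" and vf: "If2 - f0^2 > 0" and vg: "Eg2 - Eg^2 > 0"
    and e2: "Eg2 = If2 * sh + 2 * (fh20 * h10) + Ih2" and e1: "Eg = f0 * h10 + h20"
    and nf: "Nf \<ge> 0" and j1: "h10^2 \<le> sh" and j2: "h20^2 \<le> Ih2"
  shows "Nf  *  sh / (Eg2 - Eg^2) = (If2 - f0^2) / (If2 - f0^2 * h10^2/sh + (Ih2 - h20^2)/sh + 2 * h10 * ((fh20 - f0 * h20)/sh))  *  (Nf / (If2 - f0^2))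
     \<and> (h10 * fh20 \<ge> f0 * h10 * h20 \<longrightarrow> Nf  *  sh / (Eg2 - Eg^2) \<le> Nf / (If2 - f0^2))"
proof
  have den: "If2 - f0^2 * h10^2/sh + (Ih2 - h20^2)/sh + 2 * h10 * ((fh20 - f0 * h20)/sh) = (Eg2 - Eg^2) / sh"
    using sh by (simp add: e1 e2 field_simps power2_eq_square)
  have q: "a / (b / c) * (x / a) = x * c / b" if "a > 0" "b > 0" "c > 0" for a b c x :: real
    using that by (simp add: field_simps)
  show "Nf  *  sh / (Eg2 - Eg^2) = (If2 - f0^2) / (If2 - f0^2 * h10^2/sh + (Ih2 - h20^2)/sh + 2 * h10 * ((fh20 - f0 * h20)/sh))  *  (Nf / (If2 - f0^2))"
    unfolding den using q[OF vf vg sh] by simp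
  show "h10 * fh20 \<ge> f0 * h10 * h20 \<longrightarrow> Nf  *  sh / (Eg2 - Eg^2) \<le> Nf / (If2 - f0^2)"
  proof
    assume h: "h10 * fh20 \<ge> f0 * h10 * h20"
    have a: "0 \<le> f0^2  *  (sh - h10^2)" using j1 by simp
    have "(Eg2 - Eg^2) - (If2 - f0^2)  *  sh = f0^2  *  (sh - h10^2) + 2 * (h10 * fh20 - f0 * h10 * h20) + (Ih2 - h20^2)"
      by (simp add: e1 e2 power2_eq_square algebra_simps)
    moreover have "0 \<le> f0^2  *  (sh - h10^2) + 2  *  (h10  *  fh20 - f0  *  h10  *  h20) + (Ih2 - h20^2)"
      using a h j2 by (intro add_nonneg_nonneg) auto
    ultimately have "0 \<le> (Eg2 - Eg^2) - (If2 - f0^2)  *  sh" by simp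
    then have le: "(If2 - f0^2)  *  sh \<le> Eg2 - Eg^2" by simp
    have "Nf  *  sh  *  (If2 - f0^2) \<le> Nf  *  (Eg2 - Eg^2)"
      using mult_left_mono[OF le nf] by (simp add: algebra_simps)
    then show "Nf  *  sh / (Eg2 - Eg^2) \<le> Nf / (If2 - f0^2)"
      using vf vg by (simp add: divide_simps)
  qed
qed

theorem theoremA1:
  fixes n m k i :: nat
    and f :: "(nat \<Rightarrow> real) \<Rightarrow> real"
    and h1 :: "(nat \<Rightarrow> real) \<Rightarrow> real"
    and h2 :: "(nat \<Rightarrow> real) \<Rightarrow> (nat \<Rightarrow> real) \<Rightarrow> real"
  assumes "n \<ge> 1" "m \<ge> 1" "k \<ge> 1" "i \<in> {1..n}"
    and f_meas: "f \<in> borel_measurable (cube {1..n})"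
    and f_L2: "integrable (cube {1..n}) (\<lambda>x. (f x)^2)"
    and h1_meas: "h1 \<in> borel_measurable (cube {1..m})"
    and h1_L2: "integrable (cube {1..m}) (\<lambda>\<xi>. (h1 \<xi>)^2)"
    and h2_meas: "case_prod h2 \<in> borel_measurable (cube ({1..n} - {i}) \<Otimes>\<^sub>M cube {1..k})"
    and h2_L2: "integrable (cube ({1..n} - {i}) \<Otimes>\<^sub>M cube {1..k}) (\<lambda>(u, \<eta>). (h2 u \<eta>)^2)"
    and f_nonconst: "\<not> (\<exists>c. AE x in cube {1..n}. f x = c)"
    and g_def: "g = (\<lambda>(x, \<xi>, \<eta>). f x * h1 \<xi> + h2 (restrict x ({1..n} - {i})) \<eta>)"
    and var_g: "var (cube {1..n} \<Otimes>\<^sub>M (cube {1..m} \<Otimes>\<^sub>M cube {1..k})) g > 0"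
    and h1_sq_pos: "(\<integral>\<xi>. (h1 \<xi>)^2 \<partial>cube {1..m}) > 0"
  shows "total_sobol {1..n} (cube {1..m} \<Otimes>\<^sub>M cube {1..k}) i g
           = gamma_coef n m k i f h1 h2 * total_sobol_x {1..n} i f
         \<and> (mean (cube {1..m}) h1
                * mean (cube {1..n} \<Otimes>\<^sub>M cube {1..k})
                    (\<lambda>(x, \<eta>). f x * h2 (restrict x ({1..n} - {i})) \<eta>)
              \<ge> mean (cube {1..n}) f * mean (cube {1..m}) h1
                * mean (cube ({1..n} - {i}) \<Otimes>\<^sub>M cube {1..k}) (\<lambda>(u, \<eta>). h2 u \<eta>) \<longrightarrow>
              total_sobol {1..n} (cube {1..m} \<Otimes>\<^sub>M cube {1..k}) i g \<le> total_sobol_x {1..n} i f)"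
proof -
  define I where "I = {1..n}"
  define R where "R = I - {i}"
  define A where "A = cube I"
  define B where "B = cube {1..m}"
  define C where "C = cube {1..k}"
  define RC where "RC = cube R \<Otimes>\<^sub>M C"
  define N where "N = B \<Otimes>\<^sub>M C"
  define U where "U = unitI"
  have finI: "finite I" and iI: "i \<in> I" using assms(4) by (auto simp: I_def)
  have pA: "prob_space A" and pB: "prob_space B" and pC: "prob_space C" and pR: "prob_space (cube R)"
    by (auto simp: A_def B_def C_def prob_cube)
  have pN: "prob_space N" unfolding N_def by (rule prob_space_pair[OF pB pC])
  have pAC: "prob_space (A \<Otimes>\<^sub>M C)" by (rule prob_space_pair[OF pA pC])
  have pRC: "prob_space RC" unfolding RC_def by (rule prob_space_pair[OF pR pC])
  have pAN: "prob_space (A \<Otimes>\<^sub>M N)" by (rule prob_space_pair[OF pA pN])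
  have fm[measurable]: "f \<in> borel_measurable A" using f_meas by (simp add: A_def I_def)
  have fsq: "integrable A (\<lambda>x. (f x)^2)" using f_L2 by (simp add: A_def I_def)
  have h1m[measurable]: "h1 \<in> borel_measurable B" using h1_meas by (simp add: B_def)
  have h1sq: "integrable B (\<lambda>x. (h1 x)^2)" using h1_L2 by (simp add: B_def)
  have h2m: "(\<lambda>u. h2 (fst u) (snd u)) \<in> borel_measurable RC"
    using h2_meas by (simp add: RC_def C_def R_def I_def split_beta')
  have h2sq: "integrable RC (\<lambda>u. (h2 (fst u) (snd u))^2)"
    using h2_L2 by (simp add: RC_def C_def R_def I_def split_beta')
  have fint: "integrable A f" by (rule jensen_sq(1)[OF pA fm fsq])
  have h1int: "integrable B h1" by (rule jensen_sq(1)[OF pB h1m h1sq])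
  have h2int: "integrable RC (\<lambda>u. h2 (fst u) (snd u))" by (rule jensen_sq(1)[OF pRC h2m h2sq])
  have h1J: "(\<integral>x. h1 x \<partial>B)^2 \<le> (\<integral>x. (h1 x)^2 \<partial>B)" by (rule jensen_sq(2)[OF pB h1m h1sq])
  have h2J: "(\<integral>u. h2 (fst u) (snd u) \<partial>RC)^2 \<le> (\<integral>u. (h2 (fst u) (snd u))^2 \<partial>RC)"
    by (rule jensen_sq(2)[OF pRC h2m h2sq])
  have fJ: "(\<integral>x. f x \<partial>A)^2 \<le> (\<integral>x. (f x)^2 \<partial>A)" by (rule jensen_sq(2)[OF pA fm fsq])
  have mres: "(\<lambda>x. restrict x R) \<in> measurable A (cube R)"
    unfolding A_def cube_def by (rule measurable_restrict_subset) (auto simp: R_def)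
  have mrc: "(\<lambda>w. (restrict (fst w) R, snd w)) \<in> measurable (A \<Otimes>\<^sub>M C) RC"
    unfolding RC_def using mres by measurable
  have dRC: "distr (A \<Otimes>\<^sub>M C) RC (\<lambda>w. (restrict (fst w) R, snd w)) = RC"
  proof -
    have "distr A (cube R) (\<lambda>x. restrict x R) \<Otimes>\<^sub>M distr C C (\<lambda>x. x)
        = distr (A \<Otimes>\<^sub>M C) (cube R \<Otimes>\<^sub>M C) (\<lambda>(x, y). (restrict x R, y))"
      by (rule pair_measure_distr[OF mres measurable_ident_sets[OF refl]])
         (use pC in \<open>simp add: prob_space_imp_sigma_finite\<close>)
    moreover have "distr A (cube R) (\<lambda>x. restrict x R) = cube R"
      unfolding A_def by (rule distr_restrict_cube[OF finI]) (auto simp: R_def)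
    ultimately show ?thesis by (simp add: RC_def split_beta')
  qed
  have tr: "integrable (A \<Otimes>\<^sub>M C) (\<lambda>w. \<Phi> (restrict (fst w) R, snd w))
        \<and> (\<integral>w. \<Phi> (restrict (fst w) R, snd w) \<partial>(A \<Otimes>\<^sub>M C)) = (\<integral>u. \<Phi> u \<partial>RC)"
    if \<Phi>: "integrable RC \<Phi>" for \<Phi> :: "_ \<Rightarrow> real"
  proof -
    have m: "\<Phi> \<in> borel_measurable RC" using \<Phi> by auto
    show ?thesis
      using integrable_distr_eq[OF mrc m] integral_distr[OF mrc m] dRC \<Phi> by simp
  qed
  define H where "H = (\<lambda>w. h2 (restrict (fst w) R) (snd w))"
  have Hsq: "integrable (A \<Otimes>\<^sub>M C) (\<lambda>w. (H w)^2)"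
    and HsqI: "(\<integral>w. (H w)^2 \<partial>(A \<Otimes>\<^sub>M C)) = (\<integral>u. (h2 (fst u) (snd u))^2 \<partial>RC)"
    using tr[OF h2sq] by (simp_all add: H_def)
  have Hint: "integrable (A \<Otimes>\<^sub>M C) H"
    and HI: "(\<integral>w. H w \<partial>(A \<Otimes>\<^sub>M C)) = (\<integral>u. h2 (fst u) (snd u) \<partial>RC)"
    using tr[OF h2int] by (simp_all add: H_def)
  have Hm[measurable]: "H \<in> borel_measurable (A \<Otimes>\<^sub>M C)" using Hint by auto
  have fsqAC: "integrable (A \<Otimes>\<^sub>M C) (\<lambda>w. (f (fst w))^2)"
    using F0(1)[OF pC fsq] .
  have fAC: "integrable (A \<Otimes>\<^sub>M C) (\<lambda>w. f (fst w))"
    using F0(1)[OF pC fint] .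
  have fH: "integrable (A \<Otimes>\<^sub>M C) (\<lambda>w. f (fst w) * H w)"
  proof (rule Bochner_Integration.integrable_bound[OF Bochner_Integration.integrable_add[OF fsqAC Hsq]])
    show "(\<lambda>w. f (fst w) * H w) \<in> borel_measurable (A \<Otimes>\<^sub>M C)" by measurable
    show "AE w in A \<Otimes>\<^sub>M C. norm (f (fst w) * H w) \<le> norm ((f (fst w))^2 + (H w)^2)"
      using abs_mult_le_sq by auto
  qed
  have gz: "g w = f (fst w) * h1 (fst (snd w)) + H (fst w, snd (snd w))" for w
    by (simp add: g_def H_def split_beta' R_def I_def)
  interpret pBi: prob_space B by (rule pB)
  interpret pUi: prob_space unitI by (rule prob_unitI)
  have one: "integrable B (\<lambda>_. 1::real)" by simp
  have oneI: "(\<integral>_. (1::real) \<partial>B) = 1" by (simp add: pBi.prob_space)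
  note T1 = F3[OF pA pB pC fAC h1int]
  note T2 = F3[OF pA pB pC Hint one]
  note S1 = F3[OF pA pB pC fsqAC h1sq]
  note S2 = F3[OF pA pB pC fH h1int]
  note S3 = F3[OF pA pB pC Hsq one]
  have f0AC: "(\<integral>w. f (fst w) \<partial>(A \<Otimes>\<^sub>M C)) = (\<integral>x. f x \<partial>A)" using F0(2)[OF pC fint] .
  have fsqAC': "(\<integral>w. (f (fst w))^2 \<partial>(A \<Otimes>\<^sub>M C)) = (\<integral>x. (f x)^2 \<partial>A)" using F0(2)[OF pC fsq] .
  have geq: "g = (\<lambda>w. f (fst w) * h1 (fst (snd w)) + H (fst w, snd (snd w)) * 1)"
    by (rule ext) (simp add: gz)
  have g2eq: "(\<lambda>w. (g w)^2) = (\<lambda>w. ((f (fst w))^2 * (h1 (fst (snd w)))^2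
      + 2 * (f (fst w) * H (fst w, snd (snd w)) * h1 (fst (snd w))))
      + (H (fst w, snd (snd w)))^2 * 1)"
    by (rule ext) (simp add: gz power2_eq_square algebra_simps)
  have gintg: "integrable (A \<Otimes>\<^sub>M N) g"
    unfolding geq N_def by (intro Bochner_Integration.integrable_add) (use T1(1) T2(1) in simp_all)
  have Eg: "(\<integral>w. g w \<partial>(A \<Otimes>\<^sub>M N)) = (\<integral>x. f x \<partial>A) * (\<integral>x. h1 x \<partial>B) + (\<integral>w. H w \<partial>(A \<Otimes>\<^sub>M C))"
    unfolding geq N_def
    by (subst Bochner_Integration.integral_add) (use T1 T2 f0AC oneI in simp_all)
  have i1: "integrable (A \<Otimes>\<^sub>M (B \<Otimes>\<^sub>M C)) (\<lambda>w. (f (fst w))^2 * (h1 (fst (snd w)))^2)"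
    using S1(1) by simp
  have i2: "integrable (A \<Otimes>\<^sub>M (B \<Otimes>\<^sub>M C)) (\<lambda>w. 2 * (f (fst w) * H (fst w, snd (snd w)) * h1 (fst (snd w))))"
    using S2(1) by simp
  have i3: "integrable (A \<Otimes>\<^sub>M (B \<Otimes>\<^sub>M C)) (\<lambda>w. (H (fst w, snd (snd w)))^2 * 1)"
    using S3(1) by simp
  have gsq: "integrable (A \<Otimes>\<^sub>M N) (\<lambda>w. (g w)^2)"
    unfolding g2eq N_def by (intro Bochner_Integration.integrable_add i1 i2 i3)
  have Eg2: "(\<integral>w. (g w)^2 \<partial>(A \<Otimes>\<^sub>M N)) = (\<integral>x. (f x)^2 \<partial>A) * (\<integral>x. (h1 x)^2 \<partial>B)
      + 2 * ((\<integral>w. f (fst w) * H w \<partial>(A \<Otimes>\<^sub>M C)) * (\<integral>x. h1 x \<partial>B)) + (\<integral>w. (H w)^2 \<partial>(A \<Otimes>\<^sub>M C))"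
    unfolding g2eq N_def
    by (subst Bochner_Integration.integral_add, (intro Bochner_Integration.integrable_add i1 i2 i3)+,
        subst Bochner_Integration.integral_add, (intro i1 i2)+) (use S1 S2 S3 fsqAC' oneI in simp_all)
  have muA: "(\<lambda>(x,t). x(i:=t)) \<in> measurable (A \<Otimes>\<^sub>M unitI) A"
    unfolding A_def by (rule measurable_upd_cube[OF iI])
  have dA: "distr (A \<Otimes>\<^sub>M unitI) A (\<lambda>(x,t). x(i:=t)) = A"
    unfolding A_def by (rule D1[OF finI iI])
  have idA: "\<And>z s t. (\<lambda>(x,t). x(i:=t)) ((\<lambda>(x,t). x(i:=t)) (z,s), t) = (\<lambda>(x,t). x(i:=t)) (z,t)"
    by simp
  note LF = Lproj[OF pA muA dA idA fm fsq]
  define Pf where "Pf x = (\<integral>t. f (x(i:=t)) \<partial>unitI)" for x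
  have LF1: "Pf \<in> borel_measurable A" using LF(1) by (simp add: Pf_def[abs_def] fun_upd_def)
  have LF3: "integrable A (\<lambda>x. (f x - Pf x)^2)" using LF(3) by (simp add: Pf_def fun_upd_def)
  have LF4: "(\<integral>x. (f x)^2 \<partial>A) - (\<integral>x. (\<integral>t. f (x(i:=t)) \<partial>unitI)^2 \<partial>A) = (\<integral>x. (f x - Pf x)^2 \<partial>A)"
    using LF(4) by (simp add: Pf_def fun_upd_def)
  have LF5: "AE x in A. integrable unitI (\<lambda>t. f (x(i:=t)))" using LF(5) by (simp add: fun_upd_def)
  have muAN: "(\<lambda>(z,t). ((fst z)(i:=t), snd z)) \<in> measurable ((A \<Otimes>\<^sub>M N) \<Otimes>\<^sub>M unitI) (A \<Otimes>\<^sub>M N)"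
  proof -
    note muA[measurable]
    have "(\<lambda>w. (\<lambda>(x,t). x(i:=t)) (fst (fst w), snd w)) \<in> measurable ((A \<Otimes>\<^sub>M N) \<Otimes>\<^sub>M unitI) A"
      by measurable
    then show ?thesis by (simp add: split_beta')
  qed
  have dAN: "distr ((A \<Otimes>\<^sub>M N) \<Otimes>\<^sub>M unitI) (A \<Otimes>\<^sub>M N) (\<lambda>(z,t). ((fst z)(i:=t), snd z)) = A \<Otimes>\<^sub>M N"
    unfolding A_def by (rule D2[OF finI iI pN])
  have idAN: "\<And>z s t. (\<lambda>(z,t). ((fst z)(i:=t), snd z)) ((\<lambda>(z,t). ((fst z)(i:=t), snd z)) (z,s), t) = (\<lambda>(z,t). ((fst z)(i:=t), snd z)) (z,t)"
    by simp
  have gm: "g \<in> borel_measurable (A \<Otimes>\<^sub>M N)" using gintg by auto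
  note LG = Lproj[OF pAN muAN dAN idAN gm gsq]
  define Pg where "Pg z = (\<integral>t. g ((fst z)(i:=t), snd z) \<partial>unitI)" for z
  have LG1: "Pg \<in> borel_measurable (A \<Otimes>\<^sub>M N)" using LG(1) by (simp add: Pg_def[abs_def] fun_upd_def)
  have LG4: "(\<integral>z. (g z)^2 \<partial>(A \<Otimes>\<^sub>M N)) - (\<integral>z. (\<integral>t. g ((fst z)(i:=t), snd z) \<partial>unitI)^2 \<partial>(A \<Otimes>\<^sub>M N))
      = (\<integral>z. (g z - Pg z)^2 \<partial>(A \<Otimes>\<^sub>M N))"
    using LG(4) by (simp add: Pg_def fun_upd_def)
  have resH: "H (x(i:=t), e) = H (x, e)" for x t e
  proof -
    have "restrict (x(i:=t)) R = restrict x R" by (auto simp: restrict_def R_def fun_eq_iff)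
    then show ?thesis by (simp add: H_def)
  qed
  have AEf: "AE z in A \<Otimes>\<^sub>M N. integrable unitI (\<lambda>t. f ((fst z)(i:=t)))"
  proof -
    have d: "distr (A \<Otimes>\<^sub>M N) A fst = A" by (rule prob_space.distr_pair_fst[OF pN])
    have "AE x in distr (A \<Otimes>\<^sub>M N) A fst. integrable unitI (\<lambda>t. f (x(i:=t)))" unfolding d by (rule LF5)
    from AE_distrD[OF measurable_fst this] show ?thesis .
  qed
  have AEg: "AE z in A \<Otimes>\<^sub>M N. (g z - Pg z)^2 = (f (fst z) - Pf (fst z))^2 * (h1 (fst (snd z)))^2"
    using AEf
  proof eventually_elim
    case (elim z)
    have "Pg z = (\<integral>t. f ((fst z)(i:=t)) * h1 (fst (snd z)) + H (fst z, snd (snd z)) \<partial>unitI)"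
      unfolding Pg_def by (simp add: gz resH)
    also have "\<dots> = Pf (fst z) * h1 (fst (snd z)) + H (fst z, snd (snd z))"
      by (subst Bochner_Integration.integral_add) (use elim in \<open>simp_all add: Pf_def pUi.prob_space\<close>)
    finally show ?case by (simp add: gz power2_eq_square algebra_simps)
  qed
  have pAC2: "integrable (A \<Otimes>\<^sub>M C) (\<lambda>u. (f (fst u) - Pf (fst u))^2)" using F0(1)[OF pC LF3] by simp
  have pAC2I: "(\<integral>u. (f (fst u) - Pf (fst u))^2 \<partial>(A \<Otimes>\<^sub>M C)) = (\<integral>x. (f x - Pf x)^2 \<partial>A)"
    using F0(2)[OF pC LF3] by simp
  note SD = F3[OF pA pB pC pAC2 h1sq]
  have ENg: "(\<integral>z. (g z - Pg z)^2 \<partial>(A \<Otimes>\<^sub>M N)) = (\<integral>x. (f x - Pf x)^2 \<partial>A) * (\<integral>x. (h1 x)^2 \<partial>B)"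
  proof -
    have "(\<integral>z. (g z - Pg z)^2 \<partial>(A \<Otimes>\<^sub>M N)) = (\<integral>z. (f (fst z) - Pf (fst z))^2 * (h1 (fst (snd z)))^2 \<partial>(A \<Otimes>\<^sub>M N))"
    proof (rule integral_cong_AE[OF _ _ AEg])
      show "(\<lambda>z. (g z - Pg z)^2) \<in> borel_measurable (A \<Otimes>\<^sub>M N)" using gm LG1 by measurable
      show "(\<lambda>z. (f (fst z) - Pf (fst z))^2 * (h1 (fst (snd z)))^2) \<in> borel_measurable (A \<Otimes>\<^sub>M N)"
        using LF1 unfolding N_def by measurable
    qed
    also have "\<dots> = (\<integral>x. (f x - Pf x)^2 \<partial>A) * (\<integral>x. (h1 x)^2 \<partial>B)"
      using SD(2) pAC2I unfolding N_def by simp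
    finally show ?thesis .
  qed
  interpret pAi: prob_space A by (rule pA)
  have Vf: "(\<integral>x. (f x)^2 \<partial>A) - (\<integral>x. f x \<partial>A)^2 > 0"
  proof (rule ccontr)
    assume "\<not> ?thesis"
    with fJ have z: "(\<integral>x. (f x)^2 \<partial>A) - (\<integral>x. f x \<partial>A)^2 = 0" by linarith
    define c where "c = (\<integral>x. f x \<partial>A)"
    have eqf: "(\<lambda>x. (f x - c)^2) = (\<lambda>x. (f x)^2 - 2 * c * f x + c^2)"
      by (rule ext) (simp add: power2_diff)
    have ic: "integrable A (\<lambda>x. (f x - c)^2)"
      unfolding eqf using fsq fint by simp
    have "(\<integral>x. (f x - c)^2 \<partial>A) = (\<integral>x. (f x)^2 \<partial>A) - (\<integral>x. f x \<partial>A)^2"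
      unfolding c_def by (rule pAi.variance_eq[OF fint fsq])
    with z have "(\<integral>x. (f x - c)^2 \<partial>A) = 0" by simp
    then have "AE x in A. (f x - c)^2 = 0"
      using integral_nonneg_eq_0_iff_AE[OF ic] by simp
    then have "AE x in A. f x = c" by eventually_elim simp
    then have "AE x in cube {1..n}. f x = c" unfolding A_def I_def .
    then show False using f_nonconst by blast
  qed
  have Nf0: "0 \<le> (\<integral>x. (f x - Pf x)^2 \<partial>A)" by simp
  have vg: "(\<integral>w. (g w)^2 \<partial>(A \<Otimes>\<^sub>M N)) - (\<integral>w. g w \<partial>(A \<Otimes>\<^sub>M N))^2 > 0"
    using var_g by (simp add: var_def mean_def A_def I_def N_def B_def C_def)
  have eH: "(\<integral>w. H w \<partial>(A \<Otimes>\<^sub>M C)) = (\<integral>u. (\<lambda>(u, \<eta>). h2 u \<eta>) u \<partial>RC)"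
    using HI by (simp add: split_beta')
  have eH2: "(\<integral>w. (H w)^2 \<partial>(A \<Otimes>\<^sub>M C)) = (\<integral>u. (case_prod h2 u)^2 \<partial>RC)"
    using HsqI by (simp add: split_beta')
  have efH: "(\<integral>w. f (fst w) * H w \<partial>(A \<Otimes>\<^sub>M C)) = (\<integral>w. (\<lambda>(x, \<eta>). f x * h2 (restrict x R) \<eta>) w \<partial>(A \<Otimes>\<^sub>M C))"
    by (simp add: H_def split_beta')
  have j2: "(\<integral>u. (\<lambda>(u, \<eta>). h2 u \<eta>) u \<partial>RC)^2 \<le> (\<integral>u. (case_prod h2 u)^2 \<partial>RC)"
    using h2J by (simp add: split_beta')
  have ea: "(\<integral>u. h2 (fst u) (snd u) \<partial>RC) = (\<integral>u. (\<lambda>(x,y). h2 x y) u \<partial>RC)"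
    by (simp add: split_beta')
  have eb: "(\<integral>u. (h2 (fst u) (snd u))^2 \<partial>RC) = (\<integral>u. (case_prod h2 u)^2 \<partial>RC)"
    by (simp add: split_beta')
  note FA = final_alg[OF h1_sq_pos[folded B_def] Vf vg Eg2[unfolded HsqI] Eg[unfolded HI] Nf0 h1J h2J]
  show ?thesis
    unfolding total_sobol_def total_sobol_x_def gamma_coef_def mean_def var_def Let_def
    unfolding I_def[symmetric] R_def[symmetric] A_def[symmetric] B_def[symmetric] C_def[symmetric]
      N_def[symmetric] RC_def[symmetric]
    unfolding LG4 ENg LF4
    using FA[unfolded ea eb efH] by assumption
qed

end
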